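(* There is a function $\varepsilon:\mathbb{N}\to[0,\infty)$ with $\varepsilon(n)\to 0$ as $n\to\infty$ such that the following holds for every positive integer $n$. Let $\mathcal{S}\subseteq 2^{[n]}$ be a family of subsets of $[n]=\{1,\dots,n\}$. Suppose that for every $n$-element poset $(P,\preceq_P)$ there is an enumeration $v_1,\dots,v_n$ of the elements of $P$ such that for each $j\in[n]$, $$\{i\in[n]\mid v_i\preceq_P v_j\}\in\mathcal{S}.$$ Then $|\mathcal{S}|\geq 2^{(1-\varepsilon(n))n}$. *)

theory Defs
  imports Complex_Main
begin

end

theory Submission imports Defs "HOL-Library.FuncSet" "HOL-Real_Asymp.Real_Asymp" begin

lemma core:
  fixes n m :: nat and S :: "nat set set"
  assumes m: "m \<le> n" and finS: "finite S"
  and hyp: "\<forall>(A :: nat set) (R :: (nat \<times> nat) set). card A = n \<longrightarrow> partial_order_on A R \<longrightarrow>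
         (\<exists>v. bij_betw v {1..n} A \<and>
              (\<forall>j \<in> {1..n}. {i \<in> {1..n}. (v i, v j) \<in> R} \<in> S))"
  shows "(2::nat)^((n-m)*m) \<le> n^n * card S ^ m"
proof -
  define k where "k = n - m"
  define A where "A = {1..n}"
  define B where "B = {1..k}"
  define T where "T = {k+1..n}"
  define R where "R E = Id_on A \<union> E" for E :: "(nat\<times>nat) set"
  have BA: "B \<subseteq> A" "T \<subseteq> A" using m by (auto simp: A_def B_def T_def k_def)
  have BT: "a \<noteq> b" if "a \<in> B" "b \<in> T" for a b using that by (auto simp: B_def T_def)
  have po: "partial_order_on A (R E)" if "E \<subseteq> B \<times> T" for E
  proof -
    have "refl_on A (R E)" by (auto simp: refl_on_def R_def)
    moreover have "trans (R E)"
    proof (rule transI)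
      fix x y z assume xy: "(x,y) \<in> R E" and yz: "(y,z) \<in> R E"
      show "(x,z) \<in> R E"
      proof (cases "(x,y) \<in> E \<and> (y,z) \<in> E")
        case True
        then have "y \<in> T" "y \<in> B" using that by auto
        then show ?thesis using BT by blast
      next
        case False
        then show ?thesis using xy yz by (auto simp: R_def)
      qed
    qed
    moreover have "antisym (R E)" using that BT unfolding antisym_def R_def by blast
    moreover have "R E \<subseteq> A \<times> A" using that BA unfolding R_def by auto
    ultimately show ?thesis by (simp add: partial_order_on_def preorder_on_def)
  qed
  have ex: "\<exists>v. bij_betw v A A \<and> (\<forall>j\<in>A. {i\<in>A. (v i, v j) \<in> R E} \<in> S)" if "E \<subseteq> B\<times>T" for E
    using hyp po[OF that] unfolding A_def by auto
  define V where "V E = (SOME v. bij_betw v A A \<and> (\<forall>j\<in>A. {i\<in>A. (v i, v j) \<in> R E} \<in> S))" for E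
  have V: "bij_betw (V E) A A \<and> (\<forall>j\<in>A. {i\<in>A. (V E i, V E j) \<in> R E} \<in> S)" if "E \<subseteq> B\<times>T" for E
    unfolding V_def by (rule someI_ex[OF ex[OF that]])
  define F where "F E = (restrict (V E) A, restrict (\<lambda>b. {i\<in>A. (V E i, b) \<in> R E}) T)" for E
  have rec: "(a,b) \<in> E \<longleftrightarrow> (\<exists>i\<in>A. V E i = a \<and> i \<in> snd (F E) b)"
    if "E \<subseteq> B\<times>T" "a \<in> B" "b \<in> T" for E a b
  proof -
    have "a \<in> V E ` A" using V[OF that(1)] BA that(2) by (auto simp: bij_betw_def)
    moreover have "(a,b) \<in> R E \<longleftrightarrow> (a,b) \<in> E" using BT[OF that(2,3)] by (auto simp: R_def)
    ultimately show ?thesis using that(3) by (auto simp: F_def)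
  qed
  have inj: "inj_on F (Pow (B\<times>T))"
  proof (rule inj_onI)
    fix E1 E2 assume E: "E1 \<in> Pow (B\<times>T)" "E2 \<in> Pow (B\<times>T)" "F E1 = F E2"
    have r: "restrict (V E1) A = restrict (V E2) A" using E(3) by (simp add: F_def)
    have eqv: "\<forall>i\<in>A. V E1 i = V E2 i"
    proof
      fix i assume "i \<in> A" then show "V E1 i = V E2 i" using fun_cong[OF r, of i] by simp
    qed
    have eqs: "snd (F E1) = snd (F E2)" using E(3) by simp
    show "E1 = E2"
    proof (intro set_eqI)
      fix p :: "nat \<times> nat"
      obtain a b where p: "p = (a,b)" by fastforce
      show "p \<in> E1 \<longleftrightarrow> p \<in> E2"
      proof (cases "a \<in> B \<and> b \<in> T")
        case True
        have s1: "E1 \<subseteq> B \<times> T" "E2 \<subseteq> B \<times> T" using E(1,2) by auto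
        have "(\<exists>i\<in>A. V E1 i = a \<and> i \<in> snd (F E1) b) = (\<exists>i\<in>A. V E2 i = a \<and> i \<in> snd (F E2) b)"
          using eqv eqs by (metis (no_types, lifting))
        then show ?thesis using rec[OF s1(1), of a b] rec[OF s1(2), of a b] True p by simp
      next
        case False
        then show ?thesis using E p by auto
      qed
    qed
  qed
  have img: "F ` Pow (B\<times>T) \<subseteq> (A \<rightarrow>\<^sub>E A) \<times> (T \<rightarrow>\<^sub>E S)"
  proof
    fix x assume "x \<in> F ` Pow (B\<times>T)"
    then obtain E where E: "E \<subseteq> B\<times>T" "x = F E" by auto
    have b: "bij_betw (V E) A A" using V[OF E(1)] by simp
    have "{i\<in>A. (V E i, b) \<in> R E} \<in> S" if bT: "b \<in> T" for b
    proof -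
      have "b \<in> V E ` A" using b BA bT by (auto simp: bij_betw_def)
      then obtain j where "j \<in> A" "V E j = b" by blast
      then show ?thesis using V[OF E(1)] by auto
    qed
    moreover have "V E i \<in> A" if "i \<in> A" for i using b that by (auto simp: bij_betw_def)
    ultimately have "restrict (V E) A \<in> A \<rightarrow>\<^sub>E A" "restrict (\<lambda>b. {i\<in>A. (V E i, b) \<in> R E}) T \<in> T \<rightarrow>\<^sub>E S"
      by (simp_all add: restrict_PiE_iff)
    then show "x \<in> (A \<rightarrow>\<^sub>E A) \<times> (T \<rightarrow>\<^sub>E S)" using E(2) unfolding F_def by simp
  qed
  have cT: "card T = m" using m by (simp add: T_def k_def; arith)
  have cB: "card B = k" by (simp add: B_def)
  have fBT: "finite (B \<times> T)" by (simp add: B_def T_def)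
  have "(2::nat)^((n-m)*m) = card (Pow (B\<times>T))"
    by (simp add: card_Pow[OF fBT] card_cartesian_product cB cT k_def)
  also have "\<dots> = card (F ` Pow (B\<times>T))" using card_image[OF inj] by simp
  also have "\<dots> \<le> card ((A \<rightarrow>\<^sub>E A) \<times> (T \<rightarrow>\<^sub>E S))"
    by (rule card_mono[OF _ img]) (simp add: finite_PiE finS A_def T_def)
  also have "\<dots> = n^n * card S ^ m"
  proof -
    have fT: "finite T" by (simp add: T_def)
    have cA: "card (A \<rightarrow>\<^sub>E A) = n^n" by (simp add: card_PiE A_def)
    have cTS: "card (T \<rightarrow>\<^sub>E S) = card S ^ m" by (simp add: card_PiE[OF fT] cT)
    show ?thesis by (simp add: card_cartesian_product cA cTS)
  qed
  finally show ?thesis .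
qed


lemma lim: "(\<lambda>n::nat. (sqrt n + 1)/n + log 2 n / sqrt n) \<longlonglongrightarrow> 0"
  by real_asymp

lemma bound:
  fixes n m c :: nat
  assumes n: "1 \<le> n" and m1: "sqrt n \<le> m" and m2: "m \<le> sqrt n + 1" and mn: "m \<le> n"
    and h: "(2::nat)^((n-m)*m) \<le> n^n * c ^ m"
  shows "2 powr ((1 - ((sqrt n + 1)/n + log 2 n / sqrt n)) * real n) \<le> real c"
proof -
  have "1 \<le> sqrt n" using n by simp
  then have "real 1 \<le> real m" using m1 by linarith
  then have mpos: "m \<ge> 1" by (simp only: of_nat_le_iff)
  have cpos: "c > 0"
  proof (rule ccontr)
    assume "\<not> c > 0" then have "c = 0" by simp
    then show False using h mpos by (simp add: zero_power)
  qed
  have hr: "(2::real)^((n-m)*m) \<le> real n^n * real c ^ m"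
    using h by (metis of_nat_le_iff of_nat_mult of_nat_numeral of_nat_power)
  have "ln ((2::real)^((n-m)*m)) \<le> ln (real n^n * real c ^ m)"
    using hr by (subst ln_le_cancel_iff) (use n cpos in auto)
  then have "real ((n-m)*m) * ln 2 \<le> real n * ln n + real m * ln c"
    using n cpos by (simp add: ln_mult ln_realpow)
  then have "real (n-m) * ln 2 - real n * ln n / m \<le> ln c"
    using mpos by (simp add: field_simps)
  moreover have "real n * ln n / m \<le> sqrt n * ln n"
  proof -
    have sp: "sqrt n > 0" using n by simp
    have "real n * ln n / m \<le> real n * ln n / sqrt n"
      by (rule divide_left_mono) (use m1 sp n mpos in \<open>auto intro: mult_pos_pos\<close>)
    also have "real n / sqrt n = sqrt n" using sp by (metis real_div_sqrt of_nat_0_le_iff)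
    then have "real n * ln n / sqrt n = sqrt n * ln n" by (metis times_divide_eq_left)
    finally show ?thesis .
  qed
  moreover have "real (n-m) \<ge> n - (sqrt n + 1)" using mn m2 by simp
  moreover have "(1 - ((sqrt n + 1)/n + log 2 n / sqrt n)) * real n * ln 2
      = real n * ln 2 - (sqrt n + 1) * ln 2 - sqrt n * ln n"
  proof -
    have sp: "sqrt n > 0" using n by simp
    have "real n / sqrt n = sqrt n" using sp by (metis real_div_sqrt of_nat_0_le_iff)
    then show ?thesis using n sp by (simp add: log_def field_simps)
  qed
  moreover have "(n - (sqrt n + 1)) * ln 2 \<le> real (n-m) * ln 2"
    by (rule mult_right_mono) (use calculation in auto)
  moreover have "(n - (sqrt n + 1)) * ln 2 = n * ln 2 - (sqrt n + 1) * ln 2"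
    by (simp add: left_diff_distrib)
  ultimately have key: "(1 - ((sqrt n + 1)/n + log 2 n / sqrt n)) * real n * ln 2 \<le> ln c"
    by linarith
  have L: "ln (2 powr ((1 - ((sqrt n + 1)/n + log 2 n / sqrt n)) * real n)) \<le> ln c"
    using key by (simp add: ln_powr)
  have p1: "0 < (2::real) powr ((1 - ((sqrt n + 1)/n + log 2 n / sqrt n)) * real n)" by simp
  have p2: "0 < real c" using cpos by simp
  show ?thesis using L by (rule iffD1[OF ln_le_cancel_iff[OF p1 p2]])
qed

theorem proposition4p1:
  shows "\<exists>\<epsilon> :: nat \<Rightarrow> real. (\<forall>n. \<epsilon> n \<ge> 0) \<and> \<epsilon> \<longlonglongrightarrow> 0 \<and>
    (\<forall>n :: nat. \<forall>S :: nat set set. n \<ge> 1 \<longrightarrow> S \<subseteq> Pow {1..n} \<longrightarrow>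
      (\<forall>(A :: nat set) (R :: (nat \<times> nat) set). card A = n \<longrightarrow> partial_order_on A R \<longrightarrow>
         (\<exists>v. bij_betw v {1..n} A \<and>
              (\<forall>j \<in> {1..n}. {i \<in> {1..n}. (v i, v j) \<in> R} \<in> S))) \<longrightarrow>
      real (card S) \<ge> 2 powr ((1 - \<epsilon> n) * real n))"
proof (intro exI[of _ "\<lambda>n::nat. (sqrt n + 1)/n + log 2 n / sqrt n"] conjI allI impI)
  fix n :: nat
  show "0 \<le> (sqrt n + 1)/n + log 2 n / sqrt n"
    by (cases "n = 0") auto
next
  show "(\<lambda>n::nat. (sqrt n + 1)/n + log 2 n / sqrt n) \<longlonglongrightarrow> 0" by (rule lim)
next
  fix n :: nat and S :: "nat set set"
  assume n: "1 \<le> n" and SP: "S \<subseteq> Pow {1..n}" and hyp: "\<forall>(A :: nat set) (R :: (nat \<times> nat) set). card A = n \<longrightarrow> partial_order_on A R \<longrightarrow>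
         (\<exists>v. bij_betw v {1..n} A \<and>
              (\<forall>j \<in> {1..n}. {i \<in> {1..n}. (v i, v j) \<in> R} \<in> S))"
  define m where "m = nat \<lceil>sqrt n\<rceil>"
  have m1: "sqrt n \<le> m" unfolding m_def by linarith
  have e: "real m = real_of_int \<lceil>sqrt n\<rceil>" unfolding m_def by simp
  have m2: "m \<le> sqrt n + 1" using e ceiling_correct[of "sqrt n"] by linarith
  have s1: "1 \<le> sqrt n" using n by simp
  have "sqrt n \<le> sqrt n * sqrt n" using s1 mult_left_mono[of 1 "sqrt n" "sqrt n"] by simp
  then have "sqrt n \<le> n" by simp
  then have mn: "m \<le> n" unfolding m_def
    by (metis ceiling_le_iff ceiling_of_nat nat_int nat_mono of_int_of_nat_eq)
  have finS: "finite S" using SP finite_subset by (metis finite_Pow_iff finite_atLeastAtMost)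
  show "2 powr ((1 - ((sqrt n + 1)/n + log 2 n / sqrt n)) * real n) \<le> real (card S)"
    by (rule bound[OF n m1 m2 mn core[OF mn finS hyp]])
qed

end
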